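(* Let $(\mathcal{A},\circ)$ be a Novikov algebra and $\alpha$ an algebra endomorphism of $(\mathcal{A},\circ)$. Define $x\circ_\alpha y=\alpha(x)\circ\alpha(y)$ and $[x,y]^-_\alpha=\alpha(x\circ y)-\alpha(y\circ x)$ for $x,y\in\mathcal{A}$. Then $(\mathcal{A},[\cdot,\cdot]^-_\alpha,\circ_\alpha,\alpha)$ is a Hom Gel'fand-Dorfman bialgebra.
   Context: All vector spaces are over $\mathbb{C}$. A Novikov algebra is a vector space $\mathcal{A}$ with a bilinear operation $\circ$ such that $(x\circ y)\circ z=(x\circ z)\circ y$ and $(x,y,z)=(y,x,z)$ for all $x,y,z$, where $(x,y,z)=(x\circ y)\circ z-x\circ(y\circ z)$. A Hom-Novikov algebra is a vector space with a bilinear operation $\circ$ and a linear endomorphism $\alpha$ such that $(x\circ y)\circ\alpha(z)-\alpha(x)\circ(y\circ z)=(y\circ x)\circ\alpha(z)-\alpha(y)\circ(x\circ z)$ and $(x\circ y)\circ\alpha(z)=(x\circ z)\circ\alpha(y)$ for all $x,y,z$. A Hom-Lie algebra is a vector space with a bilinear map $[\cdot,\cdot]$ and a linear map $\alpha$ with $[x,y]=-[y,x]$ and $[[x,y],\alpha(z)]+[[y,z],\alpha(x)]+[[z,x],\alpha(y)]=0$. A Hom Gel'fand-Dorfman bialgebra is a vector space $\mathcal{A}$ with a linear endomorphism $\alpha$ and two bilinear operations $[\cdot,\cdot],\circ$ such that $(\mathcal{A},[\cdot,\cdot],\alpha)$ is a Hom-Lie algebra, $(\mathcal{A},\circ,\alpha)$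 is a Hom-Novikov algebra, and $[x\circ y,\alpha(z)]-[x\circ z,\alpha(y)]+[x,y]\circ\alpha(z)-[x,z]\circ\alpha(y)-\alpha(x)\circ[y,z]=0$ for all $x,y,z$. *)

theory Defs
  imports Complex_Main
begin

text \<open>A complex vector space is rendered as a type 'a of class ab_group_add together
  with a scalar multiplication sc :: complex => 'a => 'a satisfying the vector space
  axioms (locale vector_space from HOL.Vector_Spaces).\<close>

definition lin_map :: "(complex \<Rightarrow> 'a::ab_group_add \<Rightarrow> 'a) \<Rightarrow> ('a \<Rightarrow> 'a) \<Rightarrow> bool" where
  "lin_map sc f \<longleftrightarrow> (\<forall>x y. f (x + y) = f x + f y) \<and> (\<forall>c x. f (sc c x) = sc c (f x))"

definition bilin_op :: "(complex \<Rightarrow> 'a::ab_group_add \<Rightarrow> 'a) \<Rightarrow> ('a \<Rightarrow> 'a \<Rightarrow> 'a) \<Rightarrow> bool" where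
  "bilin_op sc m \<longleftrightarrow> (\<forall>z. lin_map sc (\<lambda>x. m x z)) \<and> (\<forall>x. lin_map sc (\<lambda>z. m x z))"

definition novikov :: "(complex \<Rightarrow> 'a::ab_group_add \<Rightarrow> 'a) \<Rightarrow> ('a \<Rightarrow> 'a \<Rightarrow> 'a) \<Rightarrow> bool" where
  "novikov sc m \<longleftrightarrow> bilin_op sc m \<and>
     (\<forall>x y z. m (m x y) z = m (m x z) y) \<and>
     (\<forall>x y z. m (m x y) z - m x (m y z) = m (m y x) z - m y (m x z))"

definition hom_novikov ::
  "(complex \<Rightarrow> 'a::ab_group_add \<Rightarrow> 'a) \<Rightarrow> ('a \<Rightarrow> 'a \<Rightarrow> 'a) \<Rightarrow> ('a \<Rightarrow> 'a) \<Rightarrow> bool" where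
  "hom_novikov sc m \<alpha> \<longleftrightarrow> bilin_op sc m \<and> lin_map sc \<alpha> \<and>
     (\<forall>x y z. m (m x y) (\<alpha> z) - m (\<alpha> x) (m y z) = m (m y x) (\<alpha> z) - m (\<alpha> y) (m x z)) \<and>
     (\<forall>x y z. m (m x y) (\<alpha> z) = m (m x z) (\<alpha> y))"

definition hom_lie ::
  "(complex \<Rightarrow> 'a::ab_group_add \<Rightarrow> 'a) \<Rightarrow> ('a \<Rightarrow> 'a \<Rightarrow> 'a) \<Rightarrow> ('a \<Rightarrow> 'a) \<Rightarrow> bool" where
  "hom_lie sc b \<alpha> \<longleftrightarrow> bilin_op sc b \<and> lin_map sc \<alpha> \<and>
     (\<forall>x y. b x y = - b y x) \<and>
     (\<forall>x y z. b (b x y) (\<alpha> z) + b (b y z) (\<alpha> x) + b (b z x) (\<alpha> y) = 0)"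

definition hom_GD_bialgebra ::
  "(complex \<Rightarrow> 'a::ab_group_add \<Rightarrow> 'a) \<Rightarrow> ('a \<Rightarrow> 'a \<Rightarrow> 'a) \<Rightarrow> ('a \<Rightarrow> 'a \<Rightarrow> 'a) \<Rightarrow> ('a \<Rightarrow> 'a) \<Rightarrow> bool" where
  "hom_GD_bialgebra sc b m \<alpha> \<longleftrightarrow> hom_lie sc b \<alpha> \<and> hom_novikov sc m \<alpha> \<and>
     (\<forall>x y z. b (m x y) (\<alpha> z) - b (m x z) (\<alpha> y) + m (b x y) (\<alpha> z)
              - m (b x z) (\<alpha> y) - m (\<alpha> x) (b y z) = 0)"

end

theory Submission
  imports Defs
begin

lemma lin_diff: fixes f :: "'b::ab_group_add \<Rightarrow> 'a::ab_group_add"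
  assumes "\<forall>x y. f (x + y) = f x + f y" shows "f (x - y) = f x - f y"
proof -
  have "f x = f ((x - y) + y)" by (simp add: diff_add_cancel)
  also have "\<dots> = f (x - y) + f y" using assms by blast
  finally show ?thesis by (simp add: algebra_simps)
qed

lemma lin_map_diff: "lin_map sc f \<Longrightarrow> f (x - y) = f x - f y"
  unfolding lin_map_def using lin_diff by blast

lemma lin_map_comp: "lin_map sc f \<Longrightarrow> lin_map sc g \<Longrightarrow> lin_map sc (\<lambda>x. f (g x))"
  unfolding lin_map_def by simp

lemma lin_map_sub: assumes "vector_space sc" "lin_map sc f" "lin_map sc g"
  shows "lin_map sc (\<lambda>x. f x - g x)"
proof -
  have M: "module sc" using assms(1) by (simp add: vector_space_def module_def)
  show ?thesis using assms unfolding lin_map_def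
  by (simp add: algebra_simps module.scale_right_diff_distrib[OF M])
qed

theorem corollary3p4:
  fixes sc :: "complex \<Rightarrow> 'a::ab_group_add \<Rightarrow> 'a"
    and m :: "'a \<Rightarrow> 'a \<Rightarrow> 'a" and \<alpha> :: "'a \<Rightarrow> 'a"
  assumes "vector_space sc"
    and "novikov sc m"
    and "lin_map sc \<alpha>"
    and "\<forall>x y. \<alpha> (m x y) = m (\<alpha> x) (\<alpha> y)"
  shows "hom_GD_bialgebra sc (\<lambda>x y. \<alpha> (m x y) - \<alpha> (m y x)) (\<lambda>x y. m (\<alpha> x) (\<alpha> y)) \<alpha>"
proof -
  have bil: "bilin_op sc m" and RC: "\<And>x y z. m (m x y) z = m (m x z) y"
    and LS: "\<And>x y z. m (m x y) z - m x (m y z) = m (m y x) z - m y (m x z)"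
    using assms(2) unfolding novikov_def by auto
  have linL: "\<And>z. lin_map sc (\<lambda>x. m x z)" and linR: "\<And>x. lin_map sc (\<lambda>z. m x z)"
    using bil unfolding bilin_op_def by auto
  have mLd: "\<And>x y z. m (x - y) z = m x z - m y z" using lin_map_diff[OF linL] by blast
  have mRd: "\<And>x y z. m z (x - y) = m z x - m z y" using lin_map_diff[OF linR] by blast
  have ad: "\<And>x y. \<alpha> (x - y) = \<alpha> x - \<alpha> y" using lin_map_diff[OF assms(3)] by blast
  have hom: "\<And>x y. \<alpha> (m x y) = m (\<alpha> x) (\<alpha> y)" using assms(4) by blast
  have GD: "m (m u v) w - m w (m u v) - (m (m u w) v - m v (m u w)) + m (m u v - m v u) w
            - m (m u w - m w u) v - m u (m v w - m w v) = 0" for u v w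
  proof -
    have e1: "m (m u v) w = m (m u w) v" by (rule RC)
    have e2: "m (m v u) w = m (m u v) w - m u (m v w) + m v (m u w)" using LS[of v u w]
      by (simp add: algebra_simps)
    have e3: "m (m w u) v = m (m u w) v - m u (m w v) + m w (m u v)" using LS[of w u v]
      by (simp add: algebra_simps)
    show ?thesis unfolding mLd mRd e2 e3 e1 by (simp add: algebra_simps)
  qed
  have jac: "m (m u v - m v u) w - m w (m u v - m v u) + (m (m v w - m w v) u - m u (m v w - m w v))
     + (m (m w u - m u w) v - m v (m w u - m u w)) = 0" for u v w
  proof -
    have e2: "m (m v u) w = m (m u v) w - m u (m v w) + m v (m u w)" using LS[of v u w]
      by (simp add: algebra_simps)
    have e3: "m (m w u) v = m (m u w) v - m u (m w v) + m w (m u v)" using LS[of w u v]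
      by (simp add: algebra_simps)
    have e4: "m (m w v) u = m (m v w) u - m v (m w u) + m w (m v u)" using LS[of w v u]
      by (simp add: algebra_simps)
    have r1: "m (m v w) u = m (m v u) w" by (rule RC)
    have r2: "m (m u w) v = m (m u v) w" by (rule RC)
    show ?thesis unfolding mLd mRd e2 e3 e4 r1 e2 r2 by (simp add: algebra_simps)
  qed
  show ?thesis
    unfolding hom_GD_bialgebra_def hom_lie_def hom_novikov_def bilin_op_def
  proof (intro conjI allI assms(3))
    fix z
    show "lin_map sc (\<lambda>x. \<alpha> (m x z) - \<alpha> (m z x))"
      by (intro lin_map_sub assms(1) lin_map_comp[OF assms(3)] linL linR)
    show "lin_map sc (\<lambda>x. \<alpha> (m z x) - \<alpha> (m x z))"
      by (intro lin_map_sub assms(1) lin_map_comp[OF assms(3)] linL linR)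
    show "lin_map sc (\<lambda>x. m (\<alpha> x) (\<alpha> z))"
      using lin_map_comp[OF linL assms(3)] by simp
    show "lin_map sc (\<lambda>x. m (\<alpha> z) (\<alpha> x))"
      using lin_map_comp[OF linR assms(3)] by simp
  next
    fix x y show "\<alpha> (m x y) - \<alpha> (m y x) = - (\<alpha> (m y x) - \<alpha> (m x y))" by simp
  next
    fix x y z
    show "\<alpha> (m (\<alpha> (m x y) - \<alpha> (m y x)) (\<alpha> z)) - \<alpha> (m (\<alpha> z) (\<alpha> (m x y) - \<alpha> (m y x))) +
      (\<alpha> (m (\<alpha> (m y z) - \<alpha> (m z y)) (\<alpha> x)) - \<alpha> (m (\<alpha> x) (\<alpha> (m y z) - \<alpha> (m z y)))) +
      (\<alpha> (m (\<alpha> (m z x) - \<alpha> (m x z)) (\<alpha> y)) - \<alpha> (m (\<alpha> y) (\<alpha> (m z x) - \<alpha> (m x z)))) = 0"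
      unfolding hom ad using jac[of "\<alpha> (\<alpha> x)" "\<alpha> (\<alpha> y)" "\<alpha> (\<alpha> z)"] by (simp add: hom)
  next
    fix x y z
    show "m (\<alpha> (m (\<alpha> x) (\<alpha> y))) (\<alpha> (\<alpha> z)) - m (\<alpha> (\<alpha> x)) (\<alpha> (m (\<alpha> y) (\<alpha> z))) =
          m (\<alpha> (m (\<alpha> y) (\<alpha> x))) (\<alpha> (\<alpha> z)) - m (\<alpha> (\<alpha> y)) (\<alpha> (m (\<alpha> x) (\<alpha> z)))"
      unfolding hom by (rule LS)
  next
    fix x y z
    show "m (\<alpha> (m (\<alpha> x) (\<alpha> y))) (\<alpha> (\<alpha> z)) = m (\<alpha> (m (\<alpha> x) (\<alpha> z))) (\<alpha> (\<alpha> y))"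
      unfolding hom by (rule RC)
  next
    fix x y z
    show "\<alpha> (m (m (\<alpha> x) (\<alpha> y)) (\<alpha> z)) - \<alpha> (m (\<alpha> z) (m (\<alpha> x) (\<alpha> y))) -
          (\<alpha> (m (m (\<alpha> x) (\<alpha> z)) (\<alpha> y)) - \<alpha> (m (\<alpha> y) (m (\<alpha> x) (\<alpha> z)))) +
          m (\<alpha> (\<alpha> (m x y) - \<alpha> (m y x))) (\<alpha> (\<alpha> z)) -
          m (\<alpha> (\<alpha> (m x z) - \<alpha> (m z x))) (\<alpha> (\<alpha> y)) -
          m (\<alpha> (\<alpha> x)) (\<alpha> (\<alpha> (m y z) - \<alpha> (m z y))) = 0"
      unfolding hom ad using GD[of "\<alpha> (\<alpha> x)" "\<alpha> (\<alpha> y)" "\<alpha> (\<alpha> z)"] by simp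
  qed
qed

end
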